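(* Let $p\geq 5$ be a prime, $L/\mathbb{Q}_p$ a finite extension with ring of integers $\mathcal{O}_L$, $k\geq 2$ an even integer, $e_0\in L$, and $\Lambda_{(k,r_0)}:=\mathcal{O}_L\left[\left[\frac{X-k}{e_0}\right]\right]$. Let $B^\circ(r_0)_{\rm cl}$ be the (infinite) set of classical weights of the Coleman family described in the context, and for each $\kappa\in B^\circ(r_0)_{\rm cl}$ let $P_\kappa\in\Lambda_{(k,r_0)}$ be a generator of the kernel of the evaluation map $\pi_\kappa:\Lambda_{(k,r_0)}\to\mathcal{O}_L$, $X\mapsto\kappa$, and put $(P_\kappa):=\Lambda_{(k,r_0)}[1/p]\cdot P_\kappa$. Let $h=v(\lambda)\geq 0$. Then $$\bigcap_{\kappa\in B^\circ(r_0)_{\rm cl}}\,(P_\kappa)\,\widehat{\otimes}_{\mathbb{Q}_p}\,\mathcal{H}_{v(\lambda)}(\widetilde{\Gamma}_{\rm ac})_L=0,$$ the intersection being taken inside $\Lambda_{(k,r_0)}[1/p]\,\widehat{\otimes}_{\mathbb{Q}_p}\,\mathcal{H}_{v(\lambda)}(\widetilde{\Gamma}_{\rm ac})_L$.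
   Context: Let $K$ be an imaginary quadratic field in which $p$ splits, $K_{p^\infty}$ its ring class field of conductor $p^\infty$ and $\widetilde{\Gamma}_{\rm ac}=\mathrm{Gal}(K_{p^\infty}/K)=\Gamma_{\rm ac}\times\Delta_{\rm ac}$ with $\Gamma_{\rm ac}\cong\mathbb{Z}_p$ and $\Delta_{\rm ac}$ finite; fix a topological generator $\gamma_{\rm ac}$ of $\Gamma_{\rm ac}$. For real $h\geq 0$ define on $\mathbb{Q}_p[[X]]$ the valuation $v_h(\sum_n c_nX^n)=\inf_n\{\mathrm{ord}_p(c_n)+h\ell(n)\}$ where $\ell(0)=0$ and $\ell(n)=\frac{\log n}{\log p}+1$ for $n\geq1$; let $\mathcal{H}_h=\{F: v_h(F)>-\infty\}$. Substituting $X=\gamma_{\rm ac}-1$ gives $\mathcal{H}_h(\Gamma_{\rm ac})$; set $\mathcal{H}_h(\widetilde{\Gamma}_{\rm ac}):=\mathcal{H}_h(\Gamma_{\rm ac})\otimes_{\Lambda(\Gamma_{\rm ac})}\mathbb{Z}_p[[\widetilde{\Gamma}_{\rm ac}]]$ and $\mathcal{H}_h(\widetilde{\Gamma}_{\rm ac})_L:=\mathcal{H}_h(\widetilde{\Gamma}_{\rm ac})\otimes_{\mathbb{Z}_p}L$. The ring $\Lambda_{(k,r_0)}$ is the ring of functions bounded by $1$ on an open disc in weight space about $k$ (with $r_0=p^{\mathrm{ord}_p(e_0)}<p^{(p-1)/(p-2)}$). A Coleman family $\mathbf{f}$ of constant slope $v(\lambda)$ is given over this disc, and $B^\circ(r_0)_{\rm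 cl}$ denotes its set of classical points: an infinite set of integers $\kappa$ with $|\kappa-k|_p<|e_0|_p$ at which $\mathbf{f}$ specializes to a classical eigenform of weight $\kappa$. *)

theory Defs
  imports Complex_Main "HOL-Computational_Algebra.Formal_Power_Series"
begin

definition abs_value :: "('a::field \<Rightarrow> real) \<Rightarrow> bool" where
  "abs_value av \<longleftrightarrow> (\<forall>x. av x \<ge> 0) \<and> (\<forall>x. av x = 0 \<longleftrightarrow> x = 0)
     \<and> (\<forall>x y. av (x * y) = av x * av y) \<and> (\<forall>x y. av (x + y) \<le> max (av x) (av y))"

definition av_converges :: "('a::field \<Rightarrow> real) \<Rightarrow> (nat \<Rightarrow> 'a) \<Rightarrow> 'a \<Rightarrow> bool" where
  "av_converges av s l \<longleftrightarrow> (\<lambda>n. av (s n - l)) \<longlonglongrightarrow> 0"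

definition av_complete :: "('a::field \<Rightarrow> real) \<Rightarrow> bool" where
  "av_complete av \<longleftrightarrow> (\<forall>s. (\<forall>\<epsilon>>0. \<exists>N. \<forall>m\<ge>N. \<forall>n\<ge>N. av (s m - s n) < \<epsilon>)
                            \<longrightarrow> (\<exists>l. av_converges av s l))"

text \<open>The copy of Q_p inside L: the closure of Q.\<close>
definition Qp_closure :: "('a::field_char_0 \<Rightarrow> real) \<Rightarrow> 'a set" where
  "Qp_closure av = {x. \<forall>\<epsilon>>0. \<exists>q::rat. av (x - of_rat q) < \<epsilon>}"

text \<open>L (the type 'a with absolute value av) is a finite extension of Q_p, |p| = 1/p.\<close>
definition finite_ext_Qp :: "nat \<Rightarrow> ('a::field_char_0 \<Rightarrow> real) \<Rightarrow> bool" where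
  "finite_ext_Qp p av \<longleftrightarrow> abs_value av \<and> av (of_nat p) = 1 / real p \<and> av_complete av \<and>
     (\<exists>bs::'a list. \<forall>x. \<exists>c. (\<forall>i<length bs. c i \<in> Qp_closure av) \<and>
                              x = (\<Sum>i<length bs. c i * bs ! i))"

definition int_ring :: "('a::field \<Rightarrow> real) \<Rightarrow> 'a set" where
  "int_ring av = {x. av x \<le> 1}"

section \<open>Lambda_(k,r0) = int_ring[[Y]], Y = (X - k)/e0\<close>

definition Lambda :: "('a::field \<Rightarrow> real) \<Rightarrow> 'a fps set" where
  "Lambda av = {f. \<forall>m. fps_nth f m \<in> int_ring av}"

definition eval_at :: "('a::field \<Rightarrow> real) \<Rightarrow> 'a fps \<Rightarrow> 'a \<Rightarrow> 'a \<Rightarrow> bool" where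
  "eval_at av f a s \<longleftrightarrow> av_converges av (\<lambda>N. \<Sum>m<N. fps_nth f m * a ^ m) s"

definition ell :: "nat \<Rightarrow> nat \<Rightarrow> real" where
  "ell p n = (if n = 0 then 0 else log (real p) (real n) + 1)"

text \<open>Elements: for each delta in Delta_ac (the finite type 'd), a two-variable series
  sum_{m,n} c_{m,n} Y^m Z^n (Z = gamma_ac - 1), stored as fps_nth (fps_nth (F d) n) m, with coefficients in L
  satisfying ord_p(c_{m,n}) + h ell(n) >= -C, i.e. |c_{m,n}| <= p^(C + h ell(n)).\<close>
definition HLam_ring :: "nat \<Rightarrow> ('a::field \<Rightarrow> real) \<Rightarrow> real \<Rightarrow> ('d \<Rightarrow> 'a fps fps) set" where
  "HLam_ring p av h = {F. \<exists>C. \<forall>d n m. av (fps_nth (fps_nth (F d) n) m) \<le> real p powr (C + h * ell p n)}"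

definition P_ideal :: "nat \<Rightarrow> ('a::field \<Rightarrow> real) \<Rightarrow> real \<Rightarrow> 'a fps \<Rightarrow> ('d \<Rightarrow> 'a fps fps) set" where
  "P_ideal p av h P = {(\<lambda>d. fps_const P * G d) | G. G \<in> HLam_ring p av h}"

end

theory Submission
  imports Defs
begin

lemma av0: "abs_value av \<Longrightarrow> av 0 = 0" by (simp add: abs_value_def)
lemma avnn: "abs_value av \<Longrightarrow> av x \<ge> 0" by (simp add: abs_value_def)
lemma avmult: "abs_value av \<Longrightarrow> av (x*y) = av x * av y" by (simp add: abs_value_def)
lemma avadd: "abs_value av \<Longrightarrow> av (x+y) \<le> max (av x) (av y)" by (simp add: abs_value_def)
lemma avz: "abs_value av \<Longrightarrow> av x = 0 \<longleftrightarrow> x = 0" by (simp add: abs_value_def)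

lemma av1: assumes "abs_value av" shows "av 1 = 1"
proof -
  have "av 1 = av 1 * av 1" using avmult[OF assms, of 1 1] by simp
  moreover have "av 1 \<noteq> 0" using avz[OF assms, of 1] by simp
  ultimately show ?thesis by simp
qed

lemma avneg: assumes "abs_value av" shows "av (-x) = av x"
proof -
  have "av (-1) * av (-1) = 1" using avmult[OF assms, of "-1" "-1"] av1[OF assms] by simp
  moreover have "av (-1) \<ge> 0" using avnn[OF assms] .
  ultimately have "av (-1) = 1" by (metis abs_of_nonneg abs_square_eq_1 power2_eq_square)
  then show ?thesis using avmult[OF assms, of "-1" x] by simp
qed

lemma avsub: "abs_value av \<Longrightarrow> av (x-y) \<le> max (av x) (av y)"
  using avadd[of av x "-y"] avneg[of av y] by simp

lemma avdiv: assumes "abs_value av" shows "av (x/y) = av x / av y"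
proof (cases "y = 0")
  case True then show ?thesis using av0[OF assms] by simp
next
  case False
  have "av x = av (x/y) * av y" using avmult[OF assms, of "x/y" y] False by simp
  moreover have "av y > 0" using False avz[OF assms, of y] avnn[OF assms, of y] by simp
  ultimately show ?thesis by simp
qed

lemma avsum: assumes "abs_value av" "\<forall>i\<in>S. av (g i) \<le> c" "0 \<le> c"
  shows "av (sum g S) \<le> c"
  using assms(2)
proof (induction S rule: infinite_finite_induct)
  case (infinite A) then show ?case using av0[OF assms(1)] assms(3) by simp
next
  case empty then show ?case using av0[OF assms(1)] assms(3) by simp
next
  case (insert x F)
  then show ?case using avadd[OF assms(1), of "g x" "sum g F"] by auto
qed

lemma avsum_strict: assumes "abs_value av" "finite S" "\<forall>i\<in>S. av (g i) < c" "0 < c"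
  shows "av (sum g S) < c"
  using assms(2,3)
proof (induction S rule: finite_induct)
  case empty then show ?case using av0[OF assms(1)] assms(4) by simp
next
  case (insert x F)
  then show ?case using avadd[OF assms(1), of "g x" "sum g F"] by auto
qed

lemma avdom: assumes "abs_value av" "av y < av x" shows "av (x+y) = av x"
proof -
  have "av x \<le> max (av (x+y)) (av y)" using avsub[OF assms(1), of "x+y" y] by simp
  then have "av x \<le> av (x+y)" using assms(2) by auto
  moreover have "av (x+y) \<le> av x" using avadd[OF assms(1), of x y] assms(2) by auto
  ultimately show ?thesis by simp
qed

lemma av_nat_le1: assumes "abs_value av" shows "av (of_nat n) \<le> 1"
proof (induction n)
  case 0 then show ?case using av0[OF assms] by simp
next
  case (Suc n)
  then show ?case using avadd[OF assms, of "of_nat n" 1] av1[OF assms] by (simp add: add.commute)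
qed

lemma av_int_le1: assumes "abs_value av" shows "av (of_int n) \<le> 1"
proof (cases "n \<ge> 0")
  case True then show ?thesis using av_nat_le1[OF assms, of "nat n"] by simp
next
  case False
  then have "of_int n = - (of_nat (nat (-n)) :: 'a)" by simp
  then show ?thesis using av_nat_le1[OF assms, of "nat (-n)"] avneg[OF assms] by metis
qed

lemma av_coprime: fixes av :: "'a::field \<Rightarrow> real"
  assumes "abs_value av" "av (of_nat p) = 1 / real p" "prime p" "\<not> int p dvd n"
  shows "av (of_int n :: 'a) = 1"
proof -
  have "coprime (int p) n" using assms(3,4) prime_imp_coprime by (metis prime_nat_int_transfer)
  then obtain u v where uv: "u * int p + v * n = 1" using bezout_int[of "int p" n] by auto
  have "(1::'a) = of_int u * of_nat p + of_int v * of_int n"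
    using arg_cong[OF uv, of "of_int :: int \<Rightarrow> 'a"] by simp
  then have "1 \<le> max (av (of_int u * of_nat p)) (av (of_int v * (of_int n::'a)))"
    using avadd[OF assms(1)] av1[OF assms(1)] by metis
  moreover have "av (of_int u * (of_nat p :: 'a)) \<le> 1 / real p"
    using avmult[OF assms(1)] av_int_le1[OF assms(1), of u] assms(2) avnn[OF assms(1)]
    by (simp add: divide_right_mono)
  moreover have "1 / real p < 1" proof -
    have "real p > 1" using prime_gt_1_nat[OF assms(3)] by simp
    then show ?thesis by simp
  qed
  moreover have "av (of_int v * (of_int n::'a)) \<le> av (of_int n :: 'a)"
    using avmult[OF assms(1)] av_int_le1[OF assms(1), of v] avnn[OF assms(1)]
    by (simp add: mult_left_le_one_le)
  ultimately have "1 \<le> av (of_int n :: 'a)" by linarith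
  then show ?thesis using av_int_le1[OF assms(1), of n] by simp
qed

lemma av_int_pow: fixes av :: "'a::field \<Rightarrow> real"
  assumes "abs_value av" "av (of_nat p) = 1 / real p" "prime p"
  shows "n \<noteq> 0 \<Longrightarrow> \<exists>v. av (of_int n :: 'a) = (1 / real p) ^ v"
proof (induction "nat \<bar>n\<bar>" arbitrary: n rule: less_induct)
  case less
  show ?case
  proof (cases "int p dvd n")
    case False
    then show ?thesis using av_coprime[OF assms False] by (metis power_0)
  next
    case True
    then obtain m where m: "n = int p * m" by blast
    have p1: "int p > 1" using prime_gt_1_nat[OF assms(3)] by simp
    have "m \<noteq> 0" using m less.prems by auto
    moreover have "nat \<bar>m\<bar> < nat \<bar>n\<bar>" using m p1 \<open>m \<noteq> 0\<close>
      by (simp add: abs_mult nat_mono_iff)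
    ultimately obtain v where "av (of_int m :: 'a) = (1 / real p) ^ v" using less.hyps by blast
    then have "av (of_int n :: 'a) = (1 / real p) ^ Suc v"
      using m avmult[OF assms(1), of "of_nat p" "of_int m"] assms(2) by simp
    then show ?thesis by blast
  qed
qed

fun dd :: "'a::field list \<Rightarrow> ('a \<Rightarrow> 'a) \<Rightarrow> 'a" where
  "dd [] g = 0"
| "dd [a] g = g a"
| "dd (a # b # zs) g = (dd (a # zs) g - dd (b # zs) g) / (a - b)"

fun hs :: "'a::field list \<Rightarrow> nat \<Rightarrow> 'a" where
  "hs [] 0 = 1"
| "hs [] (Suc k) = 0"
| "hs (a # zs) 0 = 1"
| "hs (a # zs) (Suc k) = hs zs (Suc k) + a * hs (a # zs) k"

lemma ddl_induct: fixes P :: "'a::field list \<Rightarrow> bool" shows "P [] \<Longrightarrow> (\<And>a. P [a]) \<Longrightarrow> (\<And>a b zs. P (a#zs) \<Longrightarrow> P (b#zs) \<Longrightarrow> P (a#b#zs)) \<Longrightarrow> P xs"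
  by (rule dd.induct[of "\<lambda>xs g. P xs" xs id]) auto

lemma hs_diff: "hs (a # zs) (Suc k) - hs (b # zs) (Suc k) = (a - b) * hs (a # b # zs) k"
proof (induction k)
  case 0 then show ?case by simp
next
  case (Suc k)
  have "hs (a # zs) (Suc (Suc k)) - hs (b # zs) (Suc (Suc k))
     = a * (hs (a # zs) (Suc k) - hs (b # zs) (Suc k)) + (a - b) * hs (b # zs) (Suc k)"
    by (simp add: algebra_simps)
  also have "\<dots> = a * ((a - b) * hs (a # b # zs) k) + (a - b) * hs (b # zs) (Suc k)"
    by (simp only: Suc)
  also have "\<dots> = (a - b) * hs (a # b # zs) (Suc k)" by (simp add: algebra_simps)
  finally show ?case .
qed

lemma dd_pow: "distinct zs \<Longrightarrow> zs \<noteq> [] \<Longrightarrow>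
  dd zs (\<lambda>z. z ^ m) = (if length zs \<le> Suc m then hs zs (Suc m - length zs) else 0)"
proof (induction zs arbitrary: m rule: ddl_induct)
  case 1 then show ?case by simp
next
  case (2 a)
  have "hs [a] m = a ^ m" by (induction m) auto
  then show ?case by simp
next
  case (3 a b zs)
  have ab: "a \<noteq> b" using 3 by auto
  have IH1: "dd (a # zs) (\<lambda>z. z ^ m) = (if length zs \<le> m then hs (a # zs) (m - length zs) else 0)"
    using 3 by auto
  have IH2: "dd (b # zs) (\<lambda>z. z ^ m) = (if length zs \<le> m then hs (b # zs) (m - length zs) else 0)"
    using 3 by auto
  show ?case
  proof (cases "length zs \<le> m")
    case False then show ?thesis using IH1 IH2 by simp
  next
    case True
    show ?thesis
    proof (cases "length zs = m")
      case True then show ?thesis using IH1 IH2 by simp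
    next
      case False
      then obtain k where k: "m - length zs = Suc k" "Suc m - length (a # b # zs) = k"
        using \<open>length zs \<le> m\<close> by (metis Suc_diff_Suc le_neq_implies_less length_Cons diff_Suc_Suc)
      have "dd (a # b # zs) (\<lambda>z. z ^ m) = (hs (a # zs) (Suc k) - hs (b # zs) (Suc k)) / (a - b)"
        using IH1 IH2 True k by simp
      also have "\<dots> = hs (a # b # zs) k" using hs_diff[of a zs k b] ab by simp
      finally show ?thesis using k True by simp
    qed
  qed
qed

lemma dd_lin: "dd zs (\<lambda>z. \<Sum>m\<in>S. c m * g m z) = (\<Sum>m\<in>S. c m * dd zs (g m))"
proof (induction zs rule: ddl_induct)
  case (3 a b zs)
  then show ?case by (simp add: sum_subtractf[symmetric] sum_divide_distrib right_diff_distrib)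
qed auto

lemma hs_bound: assumes "abs_value av" "\<forall>z\<in>set zs. av z \<le> r" "0 \<le> r"
  shows "av (hs zs k) \<le> r ^ k"
  using assms(2)
proof (induction zs k rule: hs.induct)
  case 1 then show ?case using av1[OF assms(1)] by simp
next
  case (2 k) then show ?case using av0[OF assms(1)] assms(3) by simp
next
  case (3 a zs) then show ?case using av1[OF assms(1)] by simp
next
  case (4 a zs k)
  have "av (a * hs (a # zs) k) \<le> r * r ^ k"
    using 4 avmult[OF assms(1)] avnn[OF assms(1)] by (simp add: mult_mono')
  then show ?case using 4 avadd[OF assms(1), of "hs zs (Suc k)" "a * hs (a # zs) k"] by simp
qed

lemma dd_tend: assumes "abs_value av" "\<forall>z\<in>set zs. (\<lambda>M. av (g M z)) \<longlonglongrightarrow> 0"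
  shows "(\<lambda>M. av (dd zs (g M))) \<longlonglongrightarrow> 0"
  using assms(2)
proof (induction zs rule: ddl_induct)
  case 1 then show ?case using av0[OF assms(1)] by simp
next
  case (2 a) then show ?case by simp
next
  case (3 a b zs)
  have t1: "(\<lambda>M. av (dd (a # zs) (g M))) \<longlonglongrightarrow> 0" and t2: "(\<lambda>M. av (dd (b # zs) (g M))) \<longlonglongrightarrow> 0"
    using 3 by auto
  have "(\<lambda>M. (av (dd (a # zs) (g M)) + av (dd (b # zs) (g M)))) \<longlonglongrightarrow> 0 + 0"
    by (intro tendsto_intros t1 t2)
  then have L: "(\<lambda>M. (av (dd (a # zs) (g M)) + av (dd (b # zs) (g M))) / av (a - b)) \<longlonglongrightarrow> 0" using tendsto_divide_zero by fastforce
  show ?case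
  proof (rule tendsto_sandwich[OF _ _ tendsto_const L])
    show "\<forall>\<^sub>F M in sequentially. 0 \<le> av (dd (a # b # zs) (g M))" using avnn[OF assms(1)] by simp
    show "\<forall>\<^sub>F M in sequentially. av (dd (a # b # zs) (g M)) \<le> (av (dd (a # zs) (g M)) + av (dd (b # zs) (g M))) / av (a - b)"
    proof (intro always_eventually allI)
      fix M
      have "av (dd (a # zs) (g M) - dd (b # zs) (g M)) \<le> av (dd (a # zs) (g M)) + av (dd (b # zs) (g M))"
        using avsub[OF assms(1)] avnn[OF assms(1)] by (smt (verit))
      then show "av (dd (a # b # zs) (g M)) \<le> (av (dd (a # zs) (g M)) + av (dd (b # zs) (g M))) / av (a - b)"
        using avdiv[OF assms(1)] avnn[OF assms(1), of "a-b"] by (simp add: divide_right_mono)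
    qed
  qed
qed

lemma hs_0: "hs zs 0 = 1" by (cases zs) auto

lemma main_zero:
  fixes f :: "nat \<Rightarrow> 'a::field" and av :: "'a \<Rightarrow> real"
  assumes av: "abs_value av" and bnd: "\<forall>m. av (f m) \<le> Mb" and r0: "0 < r" and r1: "r < 1"
    and Zinf: "infinite Z" and Zr: "\<forall>z\<in>Z. av z \<le> r"
    and Zz: "\<forall>z\<in>Z. (\<lambda>K. av (\<Sum>m<K. f m * z ^ m)) \<longlonglongrightarrow> 0"
  shows "f m = 0"
proof (rule ccontr)
  assume "f m \<noteq> 0"
  define T where "T = av (f m) * r ^ m"
  have T0: "T > 0" using \<open>f m \<noteq> 0\<close> avnn[OF av, of "f m"] avz[OF av, of "f m"] r0 unfolding T_def by simp
  have Mb0: "Mb \<ge> 0" using bnd avnn[OF av] by (meson order_trans)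
  have "(\<lambda>n. Mb * r ^ n) \<longlonglongrightarrow> Mb * 0"
    by (intro tendsto_intros LIMSEQ_power_zero) (use r0 r1 in auto)
  then have "\<forall>\<^sub>F n in sequentially. Mb * r ^ n < T" using T0 by (simp add: order_tendstoD(2))
  then obtain m1 where m1: "\<And>n. n \<ge> m1 \<Longrightarrow> Mb * r ^ n < T" by (auto simp: eventually_sequentially)
  define S where "S = {n. T \<le> av (f n) * r ^ n}"
  have "S \<subseteq> {..<m1}"
  proof
    fix n assume "n \<in> S"
    show "n \<in> {..<m1}"
    proof (rule ccontr)
      assume "n \<notin> {..<m1}"
      then have "Mb * r ^ n < T" using m1 by simp
      moreover have "av (f n) * r ^ n \<le> Mb * r ^ n" using bnd r0 by (simp add: mult_right_mono)
      ultimately show False using \<open>n \<in> S\<close> unfolding S_def by simp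
    qed
  qed
  then have finS: "finite S" using finite_subset by blast
  have "m \<in> S" unfolding S_def T_def by simp
  define N where "N = Max S"
  have NS: "N \<in> S" using finS \<open>m \<in> S\<close> unfolding N_def using Max_in by blast
  have gtN: "\<And>n. n > N \<Longrightarrow> av (f n) * r ^ n < T"
  proof -
    fix n assume "n > N"
    then have "n \<notin> S" using finS N_def Max_ge by (metis leD)
    then show "av (f n) * r ^ n < T" unfolding S_def by simp
  qed
  have fN: "T \<le> av (f N) * r ^ N" using NS unfolding S_def by simp
  have fN0: "av (f N) > 0" using fN T0 r0 avnn[OF av, of "f N"]
    by (metis less_le_trans mult_eq_0_iff order_le_less zero_less_power)
  obtain Z' where Z': "finite Z'" "card Z' = Suc N" "Z' \<subseteq> Z" using infinite_arbitrarily_large[OF Zinf] by blast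
  obtain zs where zs: "set zs = Z'" "distinct zs" using finite_distinct_list[OF Z'(1)] by blast
  have lzs: "length zs = Suc N" using zs Z' distinct_card by metis
  then have zsne: "zs \<noteq> []" by auto
  have zsr: "\<forall>z\<in>set zs. av z \<le> r" using zs Z' Zr by auto
  define phi where "phi n = dd zs (\<lambda>z. z ^ n)" for n
  have phi: "phi n = (if N \<le> n then hs zs (n - N) else 0)" for n
    unfolding phi_def using dd_pow[OF zs(2) zsne, of n] lzs by simp
  have lin: "dd zs (\<lambda>z. \<Sum>n<K. f n * z ^ n) = (\<Sum>n<K. f n * phi n)" for K
    unfolding phi_def using dd_lin[where zs=zs and S="{..<K}" and c=f and g="\<lambda>n z. z ^ n"] by simp
  have tend: "(\<lambda>K. av (\<Sum>n<K. f n * phi n)) \<longlonglongrightarrow> 0"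
    using dd_tend[OF av, of zs "\<lambda>K z. \<Sum>n<K. f n * z ^ n"] zs Z' Zz lin by auto
  have eq: "av (\<Sum>n<K. f n * phi n) = av (f N)" if "K > N" for K
  proof -
    have "(\<Sum>n<K. f n * phi n) = (\<Sum>n\<in>{N..<K}. f n * phi n)"
      by (rule sum.mono_neutral_right) (auto simp: phi)
    also have "\<dots> = f N * phi N + (\<Sum>n\<in>{Suc N..<K}. f n * phi n)"
      using that by (simp add: sum.atLeast_Suc_lessThan)
    also have "\<dots> = f N + (\<Sum>n\<in>{Suc N..<K}. f n * phi n)" by (simp add: phi hs_0)
    finally have e: "(\<Sum>n<K. f n * phi n) = f N + (\<Sum>n\<in>{Suc N..<K}. f n * phi n)" .
    have "av (\<Sum>n\<in>{Suc N..<K}. f n * phi n) < av (f N)"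
    proof (rule avsum_strict[OF av _ _ fN0], simp, intro ballI)
      fix n assume "n \<in> {Suc N..<K}"
      then have nN: "n > N" by simp
      have "av (f n * phi n) \<le> av (f n) * r ^ (n - N)"
        using phi[of n] nN hs_bound[OF av zsr, of "n - N"] r0 avmult[OF av] avnn[OF av]
        by (simp add: mult_left_mono)
      moreover have "av (f n) * r ^ (n - N) * r ^ N < av (f N) * r ^ N"
        using gtN[OF nN] fN nN by (simp add: mult.assoc power_add[symmetric])
      then have "av (f n) * r ^ (n - N) < av (f N)" using r0 by simp
      ultimately show "av (f n * phi n) < av (f N)" by simp
    qed
    then show ?thesis using e avdom[OF av] by simp
  qed
  have ev: "\<forall>\<^sub>F K in sequentially. av (\<Sum>n<K. f n * phi n) = av (f N)"
    unfolding eventually_sequentially by (intro exI[of _ "Suc N"]) (auto intro: eq)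
  have "(\<lambda>K. av (f N)) \<longlonglongrightarrow> 0" using tendsto_cong[OF ev] tend by simp
  then have "av (f N) = 0" using LIMSEQ_const_iff by blast
  then show False using fN0 by simp
qed

lemma avpow: "abs_value av \<Longrightarrow> av (x ^ j) = av x ^ j"
  by (induction j) (simp_all add: av1 avmult)

lemma per_kappa:
  fixes av :: "'a::field \<Rightarrow> real" and Pk g fF :: "'a fps"
  assumes av: "abs_value av" and avp: "av (of_nat p) = 1 / real p" and p1: "p > 1"
    and PL: "Pk \<in> Lambda av"
    and hyp: "\<forall>f\<in>Lambda av. eval_at av f y 0 \<longleftrightarrow> (\<exists>g\<in>Lambda av. f = Pk * g)"
    and G: "\<forall>m. av ((fps_nth g m)) \<le> K" and feq: "fF = Pk * g"
  shows "(\<forall>m. av ((fps_nth fF m)) \<le> K) \<and> (\<lambda>N. av (\<Sum>m<N. (fps_nth fF m) * y ^ m)) \<longlonglongrightarrow> 0"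
proof -
  have K0: "K \<ge> 0" using G avnn[OF av] by (meson order_trans)
  have fb: "av ((fps_nth fF m)) \<le> K" for m
  proof -
    have "(fps_nth fF m) = (\<Sum>i=0..m. (fps_nth Pk i) * (fps_nth g (m - i)))" using feq by (simp add: fps_mult_nth)
    moreover have "\<forall>i\<in>{0..m}. av ((fps_nth Pk i) * (fps_nth g (m - i))) \<le> K"
    proof
      fix i
      have "av ((fps_nth Pk i)) \<le> 1" using PL unfolding Lambda_def int_ring_def by simp
      then show "av ((fps_nth Pk i) * (fps_nth g (m - i))) \<le> K"
        using G avmult[OF av] avnn[OF av] K0 by (metis mult_left_le_one_le mult_mono' order_trans mult_1)
    qed
    ultimately show ?thesis using avsum[OF av _ K0] by simp
  qed
  have "\<exists>j. (1 / real p) ^ j < 1 / (K + 1)"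
    by (rule real_arch_pow_inv) (use p1 K0 in auto)
  then obtain j where j: "(1 / real p) ^ j < 1 / (K + 1)" by blast
  define c where "c = (of_nat p :: 'a) ^ j"
  have avc: "av c = (1 / real p) ^ j" unfolding c_def using avpow[OF av] avp by simp
  have avc0: "av c > 0" using avc p1 by simp
  have cK: "av c * K \<le> 1"
  proof -
    have "av c * K \<le> av c * (K + 1)" using avc0 by simp
    also have "\<dots> < 1" using j avc K0 by (simp add: field_simps)
    finally show ?thesis by simp
  qed
  have inL: "fps_const c * h \<in> Lambda av" if "\<forall>m. av ((fps_nth h m)) \<le> K" for h
    unfolding Lambda_def int_ring_def
    using that avmult[OF av] avc0 cK by (auto intro: order_trans[OF mult_left_mono])
  have "fps_const c * fF = Pk * (fps_const c * g)" using feq by (simp add: algebra_simps)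
  then have "eval_at av (fps_const c * fF) y 0" using hyp inL[of fF] inL[of g] fb G by blast
  then have t: "(\<lambda>N. av (\<Sum>m<N. c * (fps_nth fF m) * y ^ m)) \<longlonglongrightarrow> 0"
    unfolding eval_at_def av_converges_def by (simp add: mult.assoc)
  have "(\<lambda>N. av (\<Sum>m<N. c * (fps_nth fF m) * y ^ m) / av c) \<longlonglongrightarrow> 0"
    using tendsto_divide_zero[OF t] by simp
  moreover have "av (\<Sum>m<N. c * (fps_nth fF m) * y ^ m) / av c = av (\<Sum>m<N. (fps_nth fF m) * y ^ m)" for N
  proof -
    have "(\<Sum>m<N. c * (fps_nth fF m) * y ^ m) = c * (\<Sum>m<N. (fps_nth fF m) * y ^ m)"
      by (simp add: sum_distrib_left mult.assoc)
    then show ?thesis using avmult[OF av] avc0 by simp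
  qed
  ultimately show ?thesis using fb by simp
qed

theorem lemma4p2:
  fixes p :: nat and av :: "'a::field_char_0 \<Rightarrow> real" and k :: int and e0 :: 'a
    and h :: real and B :: "int set" and P :: "int \<Rightarrow> 'a fps"
  assumes "prime p" and "p \<ge> 5"
    and "finite_ext_Qp p av"
    and "even k" and "k \<ge> 2"
    and "e0 \<noteq> 0"
    and "av e0 > real p powr (- ((real p - 1) / (real p - 2)))"
    and "infinite B"
    and "\<forall>\<kappa>\<in>B. av (of_int (\<kappa> - k)) < av e0"
    and "\<forall>\<kappa>\<in>B. P \<kappa> \<in> Lambda av \<and>
           (\<forall>f\<in>Lambda av. eval_at av f (of_int (\<kappa> - k) / e0) 0 \<longleftrightarrow>
                           (\<exists>g\<in>Lambda av. f = P \<kappa> * g))"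
    and "h \<ge> 0"
  shows "(\<Inter>\<kappa>\<in>B. (P_ideal p av h (P \<kappa>) :: ('d::finite \<Rightarrow> 'a fps fps) set)) = {(\<lambda>d. 0)}"
proof -
  have av: "abs_value av" and avp: "av (of_nat p) = 1 / real p"
    using assms(3) unfolding finite_ext_Qp_def by auto
  have p1: "p > 1" using prime_gt_1_nat[OF assms(1)] .
  have Bne: "B \<noteq> {}" using assms(8) by auto
  have zero_in: "(\<lambda>d. 0) \<in> (P_ideal p av h Q :: ('d \<Rightarrow> 'a fps fps) set)" for Q
  proof -
    have "(\<lambda>d. 0 :: 'a fps fps) \<in> HLam_ring p av h"
      unfolding HLam_ring_def using av0[OF av] by (auto intro: exI[of _ 0])
    then show ?thesis unfolding P_ideal_def by (auto intro!: exI[of _ "\<lambda>d. 0"])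
  qed
  define y where "y \<kappa> = (of_int (\<kappa> - k) / e0 :: 'a)" for \<kappa>
  have e0pos: "av e0 > 0" using assms(6) avz[OF av, of e0] avnn[OF av, of e0] by simp
  have "\<exists>j. (1 / real p) ^ j < av e0" by (rule real_arch_pow_inv) (use p1 e0pos in auto)
  define j0 where "j0 = (LEAST j. (1 / real p) ^ j < av e0)"
  have j0: "(1 / real p) ^ j0 < av e0" unfolding j0_def using LeastI_ex[OF \<open>\<exists>j. _\<close>] .
  have j0le: "\<And>j. (1 / real p) ^ j < av e0 \<Longrightarrow> j0 \<le> j" unfolding j0_def by (rule Least_le)
  define r where "r = (1 / real p) ^ j0 / av e0"
  have r0: "r > 0" unfolding r_def using p1 e0pos by simp
  have r1: "r < 1" unfolding r_def using j0 e0pos by simp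
  have yr: "av (y \<kappa>) \<le> r" if "\<kappa> \<in> B" for \<kappa>
  proof -
    have "av (of_int (\<kappa> - k) :: 'a) \<le> (1 / real p) ^ j0"
    proof (cases "\<kappa> = k")
      case True then show ?thesis using av0[OF av] by simp
    next
      case False
      then obtain v where v: "av (of_int (\<kappa> - k) :: 'a) = (1 / real p) ^ v"
        using av_int_pow[OF av avp assms(1), of "\<kappa> - k"] by auto
      then have "j0 \<le> v" using assms(9) that j0le by auto
      then show ?thesis using v p1 by (simp add: power_decreasing)
    qed
    then show ?thesis unfolding y_def r_def using avdiv[OF av] e0pos by (simp add: divide_right_mono)
  qed
  have injy: "inj_on y B" unfolding inj_on_def y_def using assms(6) by auto
  have Zinf: "infinite (y ` B)" using assms(8) injy finite_imageD by blast
  show ?thesis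
  proof
    show "{\<lambda>d. 0} \<subseteq> (\<Inter>\<kappa>\<in>B. (P_ideal p av h (P \<kappa>) :: ('d \<Rightarrow> 'a fps fps) set))"
      using zero_in by auto
  next
    show "(\<Inter>\<kappa>\<in>B. (P_ideal p av h (P \<kappa>) :: ('d \<Rightarrow> 'a fps fps) set)) \<subseteq> {\<lambda>d. 0}"
    proof
      fix F :: "'d \<Rightarrow> 'a fps fps"
      assume F: "F \<in> (\<Inter>\<kappa>\<in>B. P_ideal p av h (P \<kappa>))"
      have "F d = 0" for d
      proof (rule fps_ext)
        fix n
        define fF where "fF = fps_nth (F d) n"
        have pk: "\<exists>K. (\<forall>m. av (fps_nth fF m) \<le> K) \<and>
            (\<lambda>N. av (\<Sum>m<N. fps_nth fF m * y \<kappa> ^ m)) \<longlonglongrightarrow> 0" if "\<kappa> \<in> B" for \<kappa>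
        proof -
          have "F \<in> P_ideal p av h (P \<kappa>)" using F that by blast
          then have "\<exists>G. F = (\<lambda>d. fps_const (P \<kappa>) * G d) \<and> G \<in> HLam_ring p av h"
            unfolding P_ideal_def by (simp only: mem_Collect_eq)
          then obtain G where G: "F = (\<lambda>d. fps_const (P \<kappa>) * G d)" "G \<in> HLam_ring p av h"
            by (elim exE conjE)
          obtain C where C: "\<forall>d n m. av (fps_nth (fps_nth (G d) n) m) \<le> real p powr (C + h * ell p n)"
            using G(2) unfolding HLam_ring_def by blast
          have feq: "fF = P \<kappa> * fps_nth (G d) n" unfolding fF_def G(1) by simp
          have h10: "P \<kappa> \<in> Lambda av"
            "\<forall>f\<in>Lambda av. eval_at av f (y \<kappa>) 0 \<longleftrightarrow> (\<exists>g\<in>Lambda av. f = P \<kappa> * g)"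
            using assms(10) that unfolding y_def by auto
          have Cb: "\<forall>m. av (fps_nth (fps_nth (G d) n) m) \<le> real p powr (C + h * ell p n)"
            using C by blast
          show ?thesis using per_kappa[OF av avp p1 h10(1) h10(2) Cb feq] by blast
        qed
        obtain \<kappa>0 where "\<kappa>0 \<in> B" using Bne by blast
        then obtain Mb where Mb: "\<forall>m. av (fps_nth fF m) \<le> Mb" using pk by blast
        have "fps_nth fF m = 0" for m
        proof (rule main_zero[OF av Mb r0 r1 Zinf])
          show "\<forall>z\<in>y ` B. av z \<le> r" using yr by auto
          show "\<forall>z\<in>y ` B. (\<lambda>K. av (\<Sum>m<K. fps_nth fF m * z ^ m)) \<longlonglongrightarrow> 0" using pk by auto
        qed
        then show "fps_nth (F d) n = fps_nth 0 n" unfolding fF_def by (simp add: fps_ext)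
      qed
      then show "F \<in> {\<lambda>d. 0}" by auto
    qed
  qed
qed

end
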